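(* Let $A$ be a real $m\times m$ matrix, $f\ne0$ in the range of $A$, $y$ the minimal-norm solution of $Ay=f$. Fix $q\in(0,1)$, $\alpha_0>0$, $C>1$, $\varepsilon\in(0,1)$. For each $\delta\in(0,1)$ let $f_\delta\in\mathbb{R}^m$ satisfy $\|f_\delta-f\|\le\delta$ and $(1-q)\alpha_0q\|Q_{\alpha_0q}^{-1}f_\delta\|>C\delta^\varepsilon$, and let $n_\delta$ be the smallest integer $n\ge1$ with $G_n\le C\delta^\varepsilon$ (the sequence $G_n$ built from $f_\delta$). Then $\lim_{\delta\to0}q^{n_\delta}=0$, and hence $\lim_{\delta\to0}n_\delta=\infty$.
   Context: $A^*$ is the transpose of $A$, $Q:=AA^*$, $Q_a:=Q+aI$ for $a>0$; $\|\cdot\|$ is the Euclidean norm. $G_0=0$ and $G_n=qG_{n-1}+(1-q)\alpha_0q^n\|Q_{\alpha_0q^n}^{-1}f_\delta\|$ for $n\ge1$. *)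

theory Defs
  imports "HOL-Analysis.Analysis"
begin

definition Qa :: "real^'m^'m \<Rightarrow> real \<Rightarrow> real^'m^'m" where
  "Qa A a = A ** transpose A + a *\<^sub>R mat 1"

primrec Gseq :: "real^'m^'m \<Rightarrow> real \<Rightarrow> real \<Rightarrow> real^'m \<Rightarrow> nat \<Rightarrow> real" where
  "Gseq A q \<alpha>0 fd 0 = 0"
| "Gseq A q \<alpha>0 fd (Suc n) = q * Gseq A q \<alpha>0 fd n
     + (1 - q) * \<alpha>0 * q ^ Suc n * norm (matrix_inv (Qa A (\<alpha>0 * q ^ Suc n)) *v fd)"

definition ndelta :: "real^'m^'m \<Rightarrow> real \<Rightarrow> real \<Rightarrow> real \<Rightarrow> real \<Rightarrow> real^'m \<Rightarrow> real \<Rightarrow> nat" where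
  "ndelta A q \<alpha>0 C \<epsilon> fd \<delta> = (LEAST n. 1 \<le> n \<and> Gseq A q \<alpha>0 fd n \<le> C * \<delta> powr \<epsilon>)"

end

theory Submission
  imports Defs
begin

lemma Qa_mult: "Qa A a *v x = A *v (transpose A *v x) + a *\<^sub>R x"
  unfolding Qa_def
  by (simp add: matrix_vector_mult_add_rdistrib matrix_vector_mul_assoc[symmetric]
      scaleR_matrix_vector_assoc[symmetric])

lemma inner_A: fixes A :: "real^'n^'k" shows "(A *v z) \<bullet> x = z \<bullet> (transpose A *v x)"
proof -
  have "(A *v z) \<bullet> x = x \<bullet> (A *v z)" by (rule inner_commute)
  also have "\<dots> = (x v* A) \<bullet> z" by (rule dot_lmul_matrix[symmetric])
  also have "\<dots> = z \<bullet> (x v* A)" by (rule inner_commute)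
  also have "x v* A = transpose A *v x" by (rule transpose_matrix_vector[symmetric])
  finally show ?thesis .
qed

lemma Qa_inner: "(Qa A a *v x) \<bullet> x = norm (transpose A *v x) ^ 2 + a * norm x ^ 2"
proof -
  have "(Qa A a *v x) \<bullet> x = (A *v (transpose A *v x)) \<bullet> x + (a *\<^sub>R x) \<bullet> x"
    by (simp only: Qa_mult inner_add_left)
  also have "(A *v (transpose A *v x)) \<bullet> x = (transpose A *v x) \<bullet> (transpose A *v x)"
    by (rule inner_A)
  also have "\<dots> = norm (transpose A *v x) ^ 2" by (rule power2_norm_eq_inner[symmetric])
  also have "(a *\<^sub>R x) \<bullet> x = a * norm x ^ 2" by (simp add: power2_norm_eq_inner)
  finally show ?thesis .
qed

lemma Qa_coercive:
  assumes "0 < a" shows "a * norm x \<le> norm (Qa A a *v x)"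
proof -
  have "a * norm x ^ 2 \<le> norm (transpose A *v x) ^ 2 + a * norm x ^ 2" by simp
  also have "\<dots> = (Qa A a *v x) \<bullet> x" by (rule Qa_inner[symmetric])
  also have "\<dots> \<le> norm (Qa A a *v x) * norm x" by (rule norm_cauchy_schwarz)
  finally have h: "(a * norm x) * norm x \<le> norm (Qa A a *v x) * norm x"
    by (simp only: power2_eq_square mult.assoc)
  show ?thesis
  proof (cases "norm x = 0")
    case True then show ?thesis using assms by simp
  next
    case False then have "norm x > 0" by simp
    with h show ?thesis by (rule mult_right_le_imp_le)
  qed
qed

lemma Qa_invertible:
  assumes "0 < a" shows "invertible (Qa A a)"
proof -
  have "inj ((*v) (Qa A a))"
  proof (rule injI)
    fix x y assume e: "Qa A a *v x = Qa A a *v y"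
    have "Qa A a *v (x - y) = Qa A a *v x - Qa A a *v y"
      by (rule matrix_vector_mult_diff_distrib)
    then have z: "Qa A a *v (x - y) = 0" using e by simp
    have "a * norm (x - y) \<le> norm (Qa A a *v (x - y))" by (rule Qa_coercive[OF assms])
    then have "a * norm (x - y) \<le> 0" using z by simp
    then have "norm (x - y) \<le> 0" using assms by (simp add: mult_le_0_iff)
    then show "x = y" by simp
  qed
  then have "\<exists>B. B ** Qa A a = mat 1" by (subst matrix_left_invertible_injective)
  then show ?thesis by (subst invertible_left_inverse)
qed

lemma matrix_inv_right:
  assumes "invertible (M::real^'n^'n)" shows "M ** matrix_inv M = mat 1"
  using assms unfolding invertible_def matrix_inv_def by (metis (mono_tags, lifting) someI_ex)

lemma Qa_inv_apply:
  assumes "0 < a" shows "Qa A a *v (matrix_inv (Qa A a) *v v) = v"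
  by (metis matrix_inv_right[OF Qa_invertible[OF assms]] matrix_vector_mul_assoc matrix_vector_mul_lid)

lemma Qa_inv_bound:
  assumes "0 < a" shows "a * norm (matrix_inv (Qa A a) *v v) \<le> norm v"
  using Qa_coercive[OF assms, of "matrix_inv (Qa A a) *v v" A] by (simp add: Qa_inv_apply[OF assms])

lemma Qa_inv_range:
  assumes "0 < a" shows "a * norm (matrix_inv (Qa A a) *v (A *v x)) \<le> sqrt a * norm x"
proof -
  define u where "u = a *\<^sub>R (matrix_inv (Qa A a) *v (A *v x))"
  have Qu: "Qa A a *v u = a *\<^sub>R (A *v x)"
    unfolding u_def by (simp add: matrix_vector_mult_scaleR Qa_inv_apply[OF assms])
  define t where "t = norm (transpose A *v u)"
  define s where "s = norm u"
  define X where "X = norm x"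
  have "t ^ 2 + a * s ^ 2 = (Qa A a *v u) \<bullet> u" unfolding t_def s_def by (simp add: Qa_inner)
  also have "\<dots> = a * (x \<bullet> (transpose A *v u))" by (simp add: Qu inner_A)
  also have "\<dots> \<le> a * (X * t)" unfolding X_def t_def
    using assms by (simp add: norm_cauchy_schwarz)
  finally have key: "t ^ 2 + a * s ^ 2 \<le> a * X * t" by simp
  have t0: "0 \<le> t" "0 \<le> s" "0 \<le> X" unfolding t_def s_def X_def by auto
  have as0: "0 \<le> a * s ^ 2" using assms by simp
  have tt: "t * t \<le> (a * X) * t" using key as0 by (simp add: power2_eq_square)
  have tle: "t \<le> a * X"
  proof (cases "t = 0")
    case True then show ?thesis using assms t0 by simp
  next
    case False then have "t > 0" using t0 by simp
    then show ?thesis using tt by (simp add: mult_le_cancel_right)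
  qed
  have "a * s ^ 2 \<le> a * X * t" using key zero_le_power2[of t] by linarith
  also have "\<dots> \<le> a * X * (a * X)" using tle t0 assms by (simp add: mult_left_mono)
  finally have "a * s ^ 2 \<le> a * (a * X ^ 2)" by (simp add: power2_eq_square mult_ac)
  then have "s ^ 2 \<le> a * X ^ 2" using assms by simp
  then have "s \<le> sqrt (a * X ^ 2)" using t0 by (simp add: real_le_rsqrt)
  then have "s \<le> sqrt a * X" using t0 by (simp add: real_sqrt_mult)
  then show ?thesis unfolding s_def u_def X_def using assms by simp
qed


lemma G_nonneg:
  assumes "0 \<le> q" "q \<le> 1" "0 \<le> \<alpha>0" shows "0 \<le> Gseq A q \<alpha>0 fd n"
  by (induction n) (use assms in auto)

lemma G_lower:
  assumes "0 \<le> q" "q \<le> 1" "0 \<le> \<alpha>0"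
  shows "(1 - q) * (\<alpha>0 * q ^ Suc m * norm (matrix_inv (Qa A (\<alpha>0 * q ^ Suc m)) *v fd))
         \<le> Gseq A q \<alpha>0 fd (Suc m)"
proof -
  have "0 \<le> q * Gseq A q \<alpha>0 fd m" using G_nonneg[OF assms, of A fd m] assms by simp
  then show ?thesis by (simp add: mult_ac)
qed

lemma G_upper:
  assumes q: "0 \<le> q" "q \<le> 1" "q \<le> r" and d: "0 \<le> d" and K: "0 \<le> K" and r: "0 \<le> r"
    and a: "\<And>k. \<alpha>0 * q ^ Suc k * norm (matrix_inv (Qa A (\<alpha>0 * q ^ Suc k)) *v fd) \<le> d + K * r ^ Suc k"
  shows "Gseq A q \<alpha>0 fd n \<le> d + K * (real n * r ^ n)"
proof (induction n)
  case 0 then show ?case using d by simp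
next
  case (Suc n)
  define b where "b = \<alpha>0 * q ^ Suc n * norm (matrix_inv (Qa A (\<alpha>0 * q ^ Suc n)) *v fd)"
  have G: "Gseq A q \<alpha>0 fd (Suc n) = q * Gseq A q \<alpha>0 fd n + (1 - q) * b"
    unfolding b_def by (simp add: mult_ac)
  have 1: "q * Gseq A q \<alpha>0 fd n \<le> q * (d + K * (real n * r ^ n))"
    using Suc q by (simp add: mult_left_mono)
  have 2: "(1 - q) * b \<le> (1 - q) * (d + K * r ^ Suc n)"
    using a[of n] q unfolding b_def by (simp add: mult_left_mono)
  have 3: "q * (real n * r ^ n) \<le> real n * r ^ Suc n"
  proof -
    have "q * (real n * r ^ n) = real n * (q * r ^ n)" by simp
    also have "\<dots> \<le> real n * (r * r ^ n)" using q r by (intro mult_left_mono mult_right_mono) auto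
    finally show ?thesis by simp
  qed
  have 4: "(1 - q) * r ^ Suc n \<le> r ^ Suc n" using q r by (simp add: mult_left_le_one_le)
  have "q * (d + K * (real n * r ^ n)) + (1 - q) * (d + K * r ^ Suc n)
        = d + K * (q * (real n * r ^ n) + (1 - q) * r ^ Suc n)" by (simp add: algebra_simps)
  also have "\<dots> \<le> d + K * (real n * r ^ Suc n + r ^ Suc n)"
    using 3 4 K by (intro add_left_mono mult_left_mono) auto
  also have "\<dots> = d + K * (real (Suc n) * r ^ Suc n)" by (simp add: algebra_simps)
  finally show ?case using G 1 2 by linarith
qed

theorem lemma2p8:
  fixes A :: "real^'m^'m" and f y :: "real^'m" and q \<alpha>0 C \<epsilon> :: real
    and fd :: "real \<Rightarrow> real^'m"
  assumes "f \<in> range (\<lambda>x. A *v x)" and "f \<noteq> 0"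
    and "A *v y = f" and "\<forall>z. A *v z = f \<longrightarrow> norm y \<le> norm z"
    and "0 < q" "q < 1" "0 < \<alpha>0" "1 < C" "0 < \<epsilon>" "\<epsilon> < 1"
    and "\<forall>\<delta>\<in>{0<..<1}. norm (fd \<delta> - f) \<le> \<delta>
           \<and> (1 - q) * \<alpha>0 * q * norm (matrix_inv (Qa A (\<alpha>0 * q)) *v fd \<delta>) > C * \<delta> powr \<epsilon>"
  shows "((\<lambda>\<delta>. q ^ ndelta A q \<alpha>0 C \<epsilon> (fd \<delta>) \<delta>) \<longlongrightarrow> 0) (at_right 0)
    \<and> filterlim (\<lambda>\<delta>. ndelta A q \<alpha>0 C \<epsilon> (fd \<delta>) \<delta>) at_top (at_right 0)"
proof -
  note q = \<open>0 < q\<close> \<open>q < 1\<close>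
  note a0 = \<open>0 < \<alpha>0\<close>
  obtain x where fx: "f = A *v x" using assms(1) by auto
  define P where "P = (\<lambda>\<delta> n. 1 \<le> n \<and> Gseq A q \<alpha>0 (fd \<delta>) n \<le> C * \<delta> powr \<epsilon>)"
  have nd: "ndelta A q \<alpha>0 C \<epsilon> (fd \<delta>) \<delta> = (LEAST n. P \<delta> n)" for \<delta>
    unfolding ndelta_def P_def by simp
  have fdb: "norm (fd \<delta> - f) \<le> \<delta>" if "0 < \<delta>" "\<delta> < 1" for \<delta>
    using assms(11) that by auto
  have split: "\<bar>a * norm (matrix_inv (Qa A a) *v fd \<delta>) - a * norm (matrix_inv (Qa A a) *v f)\<bar> \<le> \<delta>"
    if "0 < a" "0 < \<delta>" "\<delta> < 1" for a \<delta>
  proof -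
    let ?M = "matrix_inv (Qa A a)"
    have "\<bar>norm (?M *v fd \<delta>) - norm (?M *v f)\<bar> \<le> norm (?M *v fd \<delta> - ?M *v f)"
      by (rule norm_triangle_ineq3)
    also have "?M *v fd \<delta> - ?M *v f = ?M *v (fd \<delta> - f)"
      by (simp add: matrix_vector_mult_diff_distrib)
    finally have "a * \<bar>norm (?M *v fd \<delta>) - norm (?M *v f)\<bar> \<le> a * norm (?M *v (fd \<delta> - f))"
      using that by (simp add: mult_left_mono)
    also have "\<dots> \<le> norm (fd \<delta> - f)" by (rule Qa_inv_bound[OF that(1)])
    also have "\<dots> \<le> \<delta>" using fdb that by auto
    finally show ?thesis using that by (simp add: abs_mult right_diff_distrib[symmetric])
  qed
  have ex: "\<exists>n. P \<delta> n" if "0 < \<delta>" "\<delta> < 1" for \<delta>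
  proof -
    define r where "r = sqrt q"
    define K where "K = sqrt \<alpha>0 * norm x"
    have "q ^ 2 \<le> q" using q by (simp add: power2_eq_square mult_left_le_one_le)
    then have "q \<le> sqrt q" by (rule real_le_rsqrt)
    then have r: "0 \<le> r" "r < 1" "q \<le> r" unfolding r_def using q by auto
    have K: "0 \<le> K" unfolding K_def using a0 by simp
    have ak: "\<alpha>0 * q ^ Suc k * norm (matrix_inv (Qa A (\<alpha>0 * q ^ Suc k)) *v fd \<delta>) \<le> \<delta> + K * r ^ Suc k" for k
    proof -
      define a where "a = \<alpha>0 * q ^ Suc k"
      have apos: "0 < a" unfolding a_def using a0 q by simp
      have "a * norm (matrix_inv (Qa A a) *v f) \<le> sqrt a * norm x"
        unfolding fx by (rule Qa_inv_range[OF apos])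
      also have "sqrt a = sqrt \<alpha>0 * r ^ Suc k" unfolding a_def r_def
        by (simp add: real_sqrt_mult real_sqrt_power)
      finally have "a * norm (matrix_inv (Qa A a) *v f) \<le> K * r ^ Suc k"
        unfolding K_def by (simp add: mult_ac)
      then show ?thesis using split[OF apos that] unfolding a_def by linarith
    qed
    have dlt: "\<delta> < C * \<delta> powr \<epsilon>"
    proof -
      have "\<delta> = \<delta> powr 1" using that by simp
      also have "\<dots> < \<delta> powr \<epsilon>" using that \<open>\<epsilon> < 1\<close> by (intro powr_less_mono') auto
      also have "\<dots> < C * \<delta> powr \<epsilon>" using \<open>1 < C\<close> that by simp
      finally show ?thesis .
    qed
    have lim: "(\<lambda>n. K * (real n * r ^ n)) \<longlonglongrightarrow> 0"
      using tendsto_mult_right_zero[OF powser_times_n_limit_0[of r]] r by simp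
    have "eventually (\<lambda>n. K * (real n * r ^ n) < C * \<delta> powr \<epsilon> - \<delta>) sequentially"
      using order_tendstoD(2)[OF lim] dlt by simp
    then obtain N where N: "\<And>n. n \<ge> N \<Longrightarrow> K * (real n * r ^ n) < C * \<delta> powr \<epsilon> - \<delta>"
      by (auto simp: eventually_sequentially)
    define n where "n = max N 1"
    have "Gseq A q \<alpha>0 (fd \<delta>) n \<le> \<delta> + K * (real n * r ^ n)"
      by (rule G_upper[OF _ _ r(3) _ K r(1) ak]) (use q that in auto)
    also have "\<dots> < C * \<delta> powr \<epsilon>" using N[of n] unfolding n_def by simp
    finally show ?thesis unfolding P_def n_def by (intro exI[of _ "max N 1"]) simp
  qed
  have big: "eventually (\<lambda>\<delta>. C * \<delta> powr \<epsilon> < Gseq A q \<alpha>0 (fd \<delta>) (Suc m)) (at_right 0)" for m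
  proof -
    define a where "a = \<alpha>0 * q ^ Suc m"
    have apos: "0 < a" unfolding a_def using a0 q by simp
    define c where "c = norm (matrix_inv (Qa A a) *v f)"
    have "c \<noteq> 0"
    proof
      assume "c = 0"
      then have "matrix_inv (Qa A a) *v f = 0" unfolding c_def by simp
      then have "Qa A a *v (matrix_inv (Qa A a) *v f) = 0" by simp
      then show False using Qa_inv_apply[OF apos, of A f] \<open>f \<noteq> 0\<close> by simp
    qed
    then have cpos: "0 < c" unfolding c_def by simp
    have pw: "((\<lambda>\<delta>::real. \<delta> powr \<epsilon>) \<longlongrightarrow> 0) (at_right 0)"
      by (rule tendsto_zero_powrI[of _ _ "\<lambda>_. \<epsilon>" \<epsilon>])
        (auto intro: tendsto_ident_at eventually_mono[OF eventually_at_right_less] simp: \<open>0 < \<epsilon>\<close>)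
    have "((\<lambda>\<delta>. (1 - q) * (a * c - \<delta>) - C * \<delta> powr \<epsilon>) \<longlongrightarrow> (1 - q) * (a * c - 0) - C * 0) (at_right 0)"
      by (intro tendsto_intros pw tendsto_ident_at)
    moreover have "0 < (1 - q) * (a * c - 0) - C * 0" using q apos cpos by simp
    ultimately have ev: "eventually (\<lambda>\<delta>. 0 < (1 - q) * (a * c - \<delta>) - C * \<delta> powr \<epsilon>) (at_right 0)"
      by (rule order_tendstoD(1))
    have ev2: "eventually (\<lambda>\<delta>::real. \<delta> \<in> {0<..<1}) (at_right 0)"
      by (rule eventually_at_right_real) simp
    show ?thesis
    proof (rule eventually_mono[OF eventually_conj[OF ev ev2]])
      fix \<delta> :: real assume h: "0 < (1 - q) * (a * c - \<delta>) - C * \<delta> powr \<epsilon> \<and> \<delta> \<in> {0<..<1}"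
      then have d: "0 < \<delta>" "\<delta> < 1" by auto
      have "a * c - \<delta> \<le> a * norm (matrix_inv (Qa A a) *v fd \<delta>)"
        using split[OF apos d] unfolding c_def by linarith
      then have "(1 - q) * (a * c - \<delta>) \<le> (1 - q) * (a * norm (matrix_inv (Qa A a) *v fd \<delta>))"
        using q by (simp add: mult_left_mono)
      also have "\<dots> \<le> Gseq A q \<alpha>0 (fd \<delta>) (Suc m)"
        unfolding a_def by (rule G_lower) (use q a0 in auto)
      finally show "C * \<delta> powr \<epsilon> < Gseq A q \<alpha>0 (fd \<delta>) (Suc m)" using h by linarith
    qed
  qed
  have large: "eventually (\<lambda>\<delta>. N < ndelta A q \<alpha>0 C \<epsilon> (fd \<delta>) \<delta>) (at_right 0)" for N
  proof -
    have "\<forall>m\<in>{..<N}. eventually (\<lambda>\<delta>. C * \<delta> powr \<epsilon> < Gseq A q \<alpha>0 (fd \<delta>) (Suc m)) (at_right 0)"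
      using big by blast
    then have e1: "eventually (\<lambda>\<delta>. \<forall>m\<in>{..<N}. C * \<delta> powr \<epsilon> < Gseq A q \<alpha>0 (fd \<delta>) (Suc m)) (at_right 0)"
      by (rule eventually_ball_finite[OF finite_lessThan])
    have e2: "eventually (\<lambda>\<delta>::real. \<delta> \<in> {0<..<1}) (at_right 0)"
      by (rule eventually_at_right_real) simp
    show ?thesis
    proof (rule eventually_mono[OF eventually_conj[OF e1 e2]])
      fix \<delta> :: real assume h: "(\<forall>m\<in>{..<N}. C * \<delta> powr \<epsilon> < Gseq A q \<alpha>0 (fd \<delta>) (Suc m)) \<and> \<delta> \<in> {0<..<1}"
      then have "\<exists>n. P \<delta> n" using ex by auto
      then have PL: "P \<delta> (LEAST n. P \<delta> n)" by (rule LeastI_ex)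
      show "N < ndelta A q \<alpha>0 C \<epsilon> (fd \<delta>) \<delta>"
      proof (rule ccontr)
        assume "\<not> N < ndelta A q \<alpha>0 C \<epsilon> (fd \<delta>) \<delta>"
        then have le: "(LEAST n. P \<delta> n) \<le> N" using nd by simp
        have one: "1 \<le> (LEAST n. P \<delta> n)" using PL unfolding P_def by (rule conjunct1)
        obtain m where m: "(LEAST n. P \<delta> n) = Suc m"
          using Suc_le_D[OF one[unfolded One_nat_def]] by blast
        then have "m \<in> {..<N}" using le by simp
        then have "C * \<delta> powr \<epsilon> < Gseq A q \<alpha>0 (fd \<delta>) (Suc m)" using h by auto
        then show False using PL m unfolding P_def by simp
      qed
    qed
  qed
  have fl: "filterlim (\<lambda>\<delta>. ndelta A q \<alpha>0 C \<epsilon> (fd \<delta>) \<delta>) at_top (at_right 0)"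
    unfolding filterlim_at_top
  proof (intro allI)
    fix Z :: nat
    show "eventually (\<lambda>\<delta>. Z \<le> ndelta A q \<alpha>0 C \<epsilon> (fd \<delta>) \<delta>) (at_right 0)"
      using large[of Z] by (rule eventually_mono) simp
  qed
  have "((\<lambda>\<delta>. q ^ ndelta A q \<alpha>0 C \<epsilon> (fd \<delta>) \<delta>) \<longlongrightarrow> 0) (at_right 0)"
    by (rule filterlim_compose[OF LIMSEQ_power_zero fl]) (use q in simp)
  with fl show ?thesis by simp
qed

end
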